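(* Consider the Generalized Stochastic Blockmodel with $p>q$ in which all true clusters have size exactly $K$, every in-cluster pair has edge probability exactly $p$ and every other pair (different clusters or involving an outlier) has edge probability exactly $q$, and where $K=\Theta(n)$ and $n_2=\Theta(n_1)$. Then there is an absolute constant $c_2>0$ such that for all sufficiently large $n$: if some algorithm (a measurable function of the adjacency matrix $A$) recovers the true clusters correctly with probability at least $\tfrac34$ (for every possible true clustering), then $$\frac{p-q}{\sqrt{p(1-q)}}\ \ge\ \frac{c_2}{\sqrt{n}}.$$
   Context: Generalized Stochastic Blockmodel: there are $n=n_1+n_2$ nodes, split into a set $V_1$ of $n_1$ nodes and a set $V_2$ of $n_2$ outlier nodes; $V_1$ is partitioned into $r$ disjoint true clusters. Edges between distinct pairs are drawn independently, with probability $p$ for pairs in the same true cluster and probability $q$ for pairs in different clusters or with at least one node in $V_2$. $A$ is the symmetric $0/1$ adjacency matrix. The recovery task is to output the true clusters given $A$. *)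

theory Defs
  imports Complex_Main
begin

text \<open>The random graph is represented by its edge set, a subset of
  the unordered pairs, encoded as (i,j) with i < j < n; this is equivalent to the
  symmetric 0/1 adjacency matrix A with zero diagonal.\<close>

definition node_pairs :: "nat \<Rightarrow> (nat \<times> nat) set" where
  "node_pairs n = {(i, j). i < j \<and> j < n}"

text \<open>A true clustering: r pairwise disjoint clusters, each of size exactly K, inside
  the node set; V1 is their union, V2 (the outliers) are the remaining nodes.\<close>

definition valid_clustering :: "nat \<Rightarrow> nat \<Rightarrow> nat \<Rightarrow> nat set set \<Rightarrow> bool" where
  "valid_clustering n r K C \<longleftrightarrow>
     (\<forall>S\<in>C. S \<subseteq> {..<n} \<and> card S = K) \<and> pairwise disjnt C \<and> finite C \<and> card C = r"

definition same_cluster :: "nat set set \<Rightarrow> nat \<Rightarrow> nat \<Rightarrow> bool" where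
  "same_cluster C i j \<longleftrightarrow> (\<exists>S\<in>C. i \<in> S \<and> j \<in> S)"

definition edge_prob :: "real \<Rightarrow> real \<Rightarrow> nat set set \<Rightarrow> nat \<times> nat \<Rightarrow> real" where
  "edge_prob p q C e = (if same_cluster C (fst e) (snd e) then p else q)"

definition graph_prob :: "nat \<Rightarrow> real \<Rightarrow> real \<Rightarrow> nat set set \<Rightarrow> (nat \<times> nat) set \<Rightarrow> real" where
  "graph_prob n p q C E =
     (\<Prod>e\<in>node_pairs n. if e \<in> E then edge_prob p q C e else 1 - edge_prob p q C e)"

definition success_prob ::
  "nat \<Rightarrow> real \<Rightarrow> real \<Rightarrow> nat set set \<Rightarrow> ((nat \<times> nat) set \<Rightarrow> nat set set) \<Rightarrow> real" where
  "success_prob n p q C f =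
     (\<Sum>E\<in>{E. E \<subseteq> node_pairs n \<and> f E = C}. graph_prob n p q C E)"

end

theory Submission
  imports Defs
begin


lemma sum_Pow_prod:
  assumes "finite S"
  shows "(\<Sum>E\<in>Pow S. \<Prod>e\<in>S. if e \<in> E then a e else b e) = (\<Prod>e\<in>S. a e + (b e :: real))"
proof -
  have "(\<Prod>e\<in>S. a e + b e) = (\<Sum>X\<in>Pow S. (\<Prod>x\<in>X. a x) * (\<Prod>x\<in>S-X. b x))"
    by (rule prod_add[OF assms])
  also have "\<dots> = (\<Sum>E\<in>Pow S. \<Prod>e\<in>S. if e \<in> E then a e else b e)"
  proof (rule sum.cong)
    fix E assume "E \<in> Pow S"
    hence "S \<inter> {x. x \<in> E} = E" "S \<inter> - {x. x \<in> E} = S - E" by auto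
    thus "(\<Prod>x\<in>E. a x) * (\<Prod>x\<in>S-E. b x) = (\<Prod>e\<in>S. if e \<in> E then a e else b e)"
      using prod.If_cases[OF assms, of "\<lambda>x. x \<in> E" a b] by simp
  qed simp
  finally show ?thesis by simp
qed

lemma sqrt_prod: "finite S \<Longrightarrow> sqrt (\<Prod>e\<in>S. f e) = (\<Prod>e\<in>S. sqrt (f e))"
  by (induction S rule: finite_induct) (auto simp: real_sqrt_mult)

lemma pointwise:
  fixes u v :: real
  assumes "u \<ge> 0" "v \<ge> 0"
  shows "\<bar>u^2 - v^2\<bar> \<le> 17/8 * (u^2 + v^2) - 15/4 * (u * v)"
proof -
  have "u^2 - v^2 = (u-v)*(u+v)" by (simp add: power2_eq_square algebra_simps)
  hence e: "\<bar>u^2 - v^2\<bar> = \<bar>u - v\<bar> * (u + v)" using assms by (simp add: abs_mult)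
  define d where "d = \<bar>u - v\<bar>"
  have h: "d*d = (u-v)*(u-v)" unfolding d_def by (simp add: abs_mult_self_eq)
  have "0 \<le> 2*((d - (u+v)/4)*(d - (u+v)/4))" by simp
  also have "2*((d - (u+v)/4)*(d - (u+v)/4)) = 2*(d*d) - d*(u+v) + (u+v)*(u+v)/8" by (simp add: algebra_simps)
  also have "\<dots> = 2*((u-v)*(u-v)) + (u+v)*(u+v)/8 - d*(u+v)" by (simp only: h)
  also have "2*((u-v)*(u-v)) + (u+v)*(u+v)/8 = 17/8 * (u^2 + v^2) - 15/4 * (u * v)"
    by (simp add: power2_eq_square algebra_simps)
  finally show ?thesis unfolding e d_def[symmetric] by simp
qed

lemma tv_bound:
  fixes P Q :: "'a \<Rightarrow> real"
  assumes fin: "finite \<Omega>" and P0: "\<forall>w\<in>\<Omega>. P w \<ge> 0" and Q0: "\<forall>w\<in>\<Omega>. Q w \<ge> 0"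
    and P1: "sum P \<Omega> = 1" and Q1: "sum Q \<Omega> = 1"
    and AB: "A \<subseteq> \<Omega>" "B \<subseteq> \<Omega>" "A \<inter> B = {}"
    and sA: "sum P A \<ge> 3/4" and sB: "sum Q B \<ge> 3/4"
  shows "(\<Sum>w\<in>\<Omega>. sqrt (P w) * sqrt (Q w)) \<le> 13/15"
proof -
  define M where "M w = max (P w) (Q w)" for w
  have M0: "\<forall>w\<in>\<Omega>. M w \<ge> 0" using P0 unfolding M_def by (auto simp: le_max_iff_disj)
  have "sum P A \<le> sum M A" by (rule sum_mono) (simp add: M_def)
  moreover have "sum Q B \<le> sum M B" by (rule sum_mono) (simp add: M_def)
  moreover have "sum M A + sum M B = sum M (A \<union> B)"
    using AB fin by (simp add: sum.union_disjoint finite_subset)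
  moreover have "sum M (A \<union> B) \<le> sum M \<Omega>"
    using AB fin M0 by (intro sum_mono2) auto
  moreover have "sum M \<Omega> = (\<Sum>w\<in>\<Omega>. (P w + Q w)/2 + \<bar>P w - Q w\<bar>/2)"
    by (rule sum.cong) (auto simp: M_def max_def field_simps)
  moreover have "\<dots> = (sum P \<Omega> + sum Q \<Omega>)/2 + (\<Sum>w\<in>\<Omega>. \<bar>P w - Q w\<bar>)/2"
    by (simp only: sum_divide_distrib[symmetric] sum.distrib)
  moreover have "\<dots> = 1 + (\<Sum>w\<in>\<Omega>. \<bar>P w - Q w\<bar>)/2"
    using P1 Q1 by simp
  ultimately have T: "(\<Sum>w\<in>\<Omega>. \<bar>P w - Q w\<bar>) \<ge> 1" using sA sB by linarith
  have "(\<Sum>w\<in>\<Omega>. \<bar>P w - Q w\<bar>) \<le> (\<Sum>w\<in>\<Omega>. 17/8 * (P w + Q w) - 15/4 * (sqrt (P w) * sqrt (Q w)))"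
  proof (rule sum_mono)
    fix w assume "w \<in> \<Omega>"
    hence PQ: "P w \<ge> 0" "Q w \<ge> 0" using P0 Q0 by auto
    have "\<bar>(sqrt (P w))^2 - (sqrt (Q w))^2\<bar> \<le> 17/8 * ((sqrt (P w))^2 + (sqrt (Q w))^2) - 15/4 * (sqrt (P w) * sqrt (Q w))"
      by (intro pointwise) (simp_all add: PQ)
    thus "\<bar>P w - Q w\<bar> \<le> 17/8 * (P w + Q w) - 15/4 * (sqrt (P w) * sqrt (Q w))"
      using PQ by simp
  qed
  also have "\<dots> = 17/8 * (sum P \<Omega> + sum Q \<Omega>) - 15/4 * (\<Sum>w\<in>\<Omega>. sqrt (P w) * sqrt (Q w))"
    by (simp only: sum_subtractf sum_distrib_left[symmetric] sum.distrib)
  also have "\<dots> = 17/4 - 15/4 * (\<Sum>w\<in>\<Omega>. sqrt (P w) * sqrt (Q w))"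
    using P1 Q1 by simp
  finally show ?thesis using T by linarith
qed

lemma final:
  fixes p q a :: real and m n :: nat
  assumes q0: "0 \<le> q" and qp: "q < p" and p1: "p \<le> 1"
    and a: "a = sqrt p * sqrt q + sqrt (1-p) * sqrt (1-q)"
    and am: "a ^ m \<le> 13/15" and mn: "real m \<le> 4 * real n" and n: "n > 0"
  shows "(p - q) / sqrt (p * (1 - q)) \<ge> (1/6) / sqrt (real n)"
proof -
  have pp: "p > 0" and qq: "1 - q > 0" using assms by auto
  define x where "x = (p-q)^2 / (p * (1-q))"
  have rat: "(p - q) / sqrt (p * (1 - q)) = sqrt x"
    unfolding x_def using qp by (simp add: real_sqrt_divide)
  define s where "s = sqrt p"
  define t where "t = sqrt q"
  define u where "u = sqrt (1-p)"
  define w where "w = sqrt (1-q)"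
  have "1 - p \<ge> 0" using p1 by simp
  hence s2: "s^2 = p" "t^2 = q" "u^2 = 1-p" "w^2 = 1-q" using q0 pp qq unfolding s_def t_def u_def w_def by simp_all
  have nn: "s \<ge> 0" "t \<ge> 0" "u \<ge> 0" "w \<ge> 0" using q0 pp qq p1 unfolding s_def t_def u_def w_def by simp_all
  have h1: "1 - a = ((s-t)^2 + (w-u)^2)/2"
    using s2 unfolding a s_def[symmetric] t_def[symmetric] u_def[symmetric] w_def[symmetric]
    by (simp add: power2_eq_square algebra_simps)
  have "(s-t)^2 * s^2 \<le> (s-t)^2 * (s+t)^2" using nn by (intro mult_left_mono power_mono) auto
  also have "\<dots> = (p-q)^2" using s2 by (simp add: power2_eq_square algebra_simps)
  finally have b1: "(s-t)^2 \<le> (p-q)^2 / p" using pp s2 by (simp add: field_simps)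
  have "(w-u)^2 * w^2 \<le> (w-u)^2 * (w+u)^2" using nn by (intro mult_left_mono power_mono) auto
  also have "\<dots> = (w^2-u^2)^2" by (simp add: power2_eq_square algebra_simps)
  also have "\<dots> = (p-q)^2" using s2 by simp
  finally have b2: "(w-u)^2 \<le> (p-q)^2 / (1-q)" using qq s2 by (simp add: field_simps)
  have "(p-q)^2 / p + (p-q)^2/(1-q) = (p-q)^2 * (1 - q + p) / (p*(1-q))"
    using pp qq by (simp add: field_simps)
  also have "\<dots> \<le> (p-q)^2 * 2 / (p*(1-q))"
    using pp qq p1 q0 by (intro divide_right_mono mult_left_mono) auto
  also have "(p-q)^2 * 2 / (p*(1-q)) = 2 * x" unfolding x_def by simp
  finally have ab: "(p-q)^2 / p + (p-q)^2/(1-q) \<le> 2 * x" .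
  have "1 - a = ((s-t)^2 + (w-u)^2)/2" by (rule h1)
  also have "\<dots> \<le> ((p-q)^2/p + (p-q)^2/(1-q))/2" by (intro divide_right_mono add_mono b1 b2) simp
  also have "\<dots> \<le> x" using ab by simp
  finally have ax: "1 - a \<le> x" .
  have "real n \<ge> 1" using n by simp
  hence sn: "sqrt (real n) \<ge> 1" using real_sqrt_le_mono[of 1 "real n"] by simp
  show ?thesis
  proof (cases "x \<ge> 1")
    case True
    hence "sqrt x \<ge> 1" by simp
    moreover have "(1/6) / sqrt (real n) \<le> (1/6) / 1" by (rule divide_left_mono) (use sn in auto)
    ultimately show ?thesis using rat by linarith
  next
    case False
    have x0: "x \<ge> 0" unfolding x_def using pp qq by simp
    have "1 + real m * (-x) \<le> (1 + (-x))^m" by (rule Bernoulli_inequality) (use False in auto)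
    also have "\<dots> \<le> a^m" using ax False by (intro power_mono) auto
    finally have "1 - real m * x \<le> 13/15" using am by simp
    hence "2/15 \<le> real m * x" by simp
    also have "\<dots> \<le> 4 * real n * x" using mn x0 by (intro mult_right_mono) auto
    finally have "x \<ge> (1/6)^2 / real n" using n by (simp add: field_simps)
    hence "sqrt x \<ge> sqrt ((1/6)^2 / real n)" by simp
    also have "sqrt ((1/6)^2 / real n) = (1/6) / sqrt (real n)" by (simp add: real_sqrt_divide)
    finally show ?thesis using rat by simp
  qed
qed



definition cl0 :: "nat \<Rightarrow> nat \<Rightarrow> nat set set" where
  "cl0 r K = (\<lambda>i. {i*K..<Suc i*K}) ` {..<r}"

lemma cl0_valid:
  assumes "r * K \<le> n" "K \<ge> 1"
  shows "valid_clustering n r K (cl0 r K)"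
proof -
  have sub: "{i*K..<Suc i*K} \<subseteq> {..<n}" if "i < r" for i
  proof -
    have "Suc i * K \<le> r * K" using that by (intro mult_le_mono1) simp
    thus ?thesis using assms by auto
  qed
  have dis: "disjnt {i*K..<Suc i*K} {j*K..<Suc j*K}" if "i < j" for i j
  proof -
    have "Suc i * K \<le> j * K" using that by (intro mult_le_mono1) simp
    thus ?thesis by (auto simp: disjnt_def)
  qed
  have inj: "inj_on (\<lambda>i. {i*K..<Suc i*K}) {..<r}"
  proof (rule inj_onI)
    fix i j assume "i \<in> {..<r}" "j \<in> {..<r}" and eq: "{i*K..<Suc i*K} = {j*K..<Suc j*K}"
    have "i*K \<in> {i*K..<Suc i*K}" "j*K \<in> {j*K..<Suc j*K}" using assms by auto
    hence "i*K \<in> {j*K..<Suc j*K}" "j*K \<in> {i*K..<Suc i*K}" using eq by blast+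
    hence h1: "j*K \<le> i*K" and h2: "i*K \<le> j*K" unfolding atLeastLessThan_iff by blast+
    from h1 have "j \<le> i" using assms by simp
    moreover from h2 have "i \<le> j" using assms by simp
    ultimately show "i = j" by simp
  qed
  show ?thesis unfolding valid_clustering_def cl0_def
  proof (intro conjI)
    show "\<forall>S\<in>(\<lambda>i. {i * K..<Suc i * K}) ` {..<r}. S \<subseteq> {..<n} \<and> card S = K"
      using sub by auto
    show "pairwise disjnt ((\<lambda>i. {i * K..<Suc i * K}) ` {..<r})"
      unfolding pairwise_def
    proof (clarify)
      fix i j assume ne: "{i * K..<Suc i * K} \<noteq> {j * K..<Suc j * K}"
      hence "i \<noteq> j" by auto
      hence "i < j \<or> j < i" by auto
      thus "disjnt {i * K..<Suc i * K} {j * K..<Suc j * K}"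
        using dis disjnt_sym by blast
    qed
    show "card ((\<lambda>i. {i * K..<Suc i * K}) ` {..<r}) = r"
      using card_image[OF inj] by simp
  qed simp
qed

definition sw :: "nat \<Rightarrow> nat \<Rightarrow> nat \<Rightarrow> nat" where
  "sw a b x = (if x = a then b else if x = b then a else x)"

lemma sw_sw[simp]: "sw a b (sw a b x) = x"
  by (simp add: sw_def)

lemma inj_sw: "inj (sw a b)"
  by (metis injI sw_sw)

lemma sw_mem: "(y \<in> sw a b ` S) = (sw a b y \<in> S)"
  by (metis image_iff sw_sw)

lemma swap_valid:
  assumes "valid_clustering n r K C" "a < n" "b < n"
  shows "valid_clustering n r K ((`) (sw a b) ` C)"
proof -
  have injI: "inj ((`) (sw a b))" using inj_sw by (simp add: inj_image_eq_iff inj_def)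
  have sw_lt: "x < n \<Longrightarrow> sw a b x < n" for x using assms by (simp add: sw_def)
  show ?thesis
    using assms(1) unfolding valid_clustering_def
  proof (intro conjI)
    assume h: "(\<forall>S\<in>C. S \<subseteq> {..<n} \<and> card S = K) \<and> pairwise disjnt C \<and> finite C \<and> card C = r"
    show "\<forall>S\<in>(`) (sw a b) ` C. S \<subseteq> {..<n} \<and> card S = K"
      using h sw_lt by (auto simp: card_image inj_on_subset[OF inj_sw])
    show "pairwise disjnt ((`) (sw a b) ` C)"
      unfolding pairwise_def
    proof (clarify)
      fix S T assume ST: "S \<in> C" "T \<in> C" "sw a b ` S \<noteq> sw a b ` T"
      hence "S \<noteq> T" by auto
      hence "S \<inter> T = {}" using h ST unfolding pairwise_def disjnt_def by blast
      hence "sw a b ` S \<inter> sw a b ` T = {}" by (simp add: image_Int[OF inj_sw, symmetric])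
      thus "disjnt (sw a b ` S) (sw a b ` T)" by (simp add: disjnt_def)
    qed
    show "finite ((`) (sw a b) ` C)" using h by simp
    show "card ((`) (sw a b) ` C) = r" using h card_image[OF inj_on_subset[OF injI]] by simp
  qed
qed

lemma swap_same: "same_cluster ((`) (sw a b) ` C) i j = same_cluster C (sw a b i) (sw a b j)"
  unfolding same_cluster_def by (auto simp: sw_mem)



lemma ep_bounds: "0 \<le> q \<Longrightarrow> q < p \<Longrightarrow> p \<le> 1 \<Longrightarrow> 0 \<le> edge_prob p q C e \<and> edge_prob p q C e \<le> 1"
  by (simp add: edge_prob_def)

lemma finite_np: "finite (node_pairs n)"
  by (rule finite_subset[of _ "{..<n} \<times> {..<n}"]) (auto simp: node_pairs_def)

lemma gp_sum: assumes "0 \<le> q" "q < p" "p \<le> 1"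
  shows "sum (graph_prob n p q C) (Pow (node_pairs n)) = 1"
proof -
  have "sum (graph_prob n p q C) (Pow (node_pairs n)) = (\<Prod>e\<in>node_pairs n. edge_prob p q C e + (1 - edge_prob p q C e))"
    unfolding graph_prob_def by (rule sum_Pow_prod[OF finite_np])
  also have "\<dots> = 1" by simp
  finally show ?thesis .
qed

lemma gp_nonneg: assumes "0 \<le> q" "q < p" "p \<le> 1"
  shows "graph_prob n p q C E \<ge> 0"
  unfolding graph_prob_def using ep_bounds[OF assms] by (intro prod_nonneg) auto

lemma bc_formula:
  fixes n :: nat and C C' :: "nat set set"
  assumes q0: "0 \<le> q" and qp: "q < p" and p1: "p \<le> 1"
  defines "D \<equiv> {e \<in> node_pairs n. edge_prob p q C e \<noteq> edge_prob p q C' e}"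
  shows "(\<Sum>E\<in>Pow (node_pairs n). sqrt (graph_prob n p q C E) * sqrt (graph_prob n p q C' E))
     = (sqrt p * sqrt q + sqrt (1-p) * sqrt (1-q)) ^ card D"
proof -
  define NP where "NP = node_pairs n"
  define e0 where "e0 = edge_prob p q C"
  define e1 where "e1 = edge_prob p q C'"
  define a where "a = sqrt p * sqrt q + sqrt (1-p) * sqrt (1-q)"
  have fNP: "finite NP" unfolding NP_def by (rule finite_np)
  have DNP: "D \<subseteq> NP" unfolding D_def NP_def by auto
  have step1: "sqrt (graph_prob n p q C E) * sqrt (graph_prob n p q C' E) =
      (\<Prod>e\<in>NP. if e \<in> E then sqrt (e0 e) * sqrt (e1 e) else sqrt (1 - e0 e) * sqrt (1 - e1 e))" for E
  proof -
    have "sqrt (graph_prob n p q C E) = (\<Prod>e\<in>NP. sqrt (if e \<in> E then e0 e else 1 - e0 e))"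
      unfolding graph_prob_def NP_def e0_def by (rule sqrt_prod[OF finite_np])
    moreover have "sqrt (graph_prob n p q C' E) = (\<Prod>e\<in>NP. sqrt (if e \<in> E then e1 e else 1 - e1 e))"
      unfolding graph_prob_def NP_def e1_def by (rule sqrt_prod[OF finite_np])
    moreover have "(\<Prod>e\<in>NP. sqrt (if e \<in> E then e0 e else 1 - e0 e)) * (\<Prod>e\<in>NP. sqrt (if e \<in> E then e1 e else 1 - e1 e))
       = (\<Prod>e\<in>NP. sqrt (if e \<in> E then e0 e else 1 - e0 e) * sqrt (if e \<in> E then e1 e else 1 - e1 e))"
      by (rule prod.distrib[symmetric])
    moreover have "\<dots> = (\<Prod>e\<in>NP. if e \<in> E then sqrt (e0 e) * sqrt (e1 e) else sqrt (1 - e0 e) * sqrt (1 - e1 e))"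
      by (rule prod.cong) simp_all
    ultimately show ?thesis by simp
  qed
  have "(\<Sum>E\<in>Pow NP. sqrt (graph_prob n p q C E) * sqrt (graph_prob n p q C' E))
     = (\<Sum>E\<in>Pow NP. \<Prod>e\<in>NP. if e \<in> E then sqrt (e0 e) * sqrt (e1 e) else sqrt (1 - e0 e) * sqrt (1 - e1 e))"
    using step1 by simp
  also have "\<dots> = (\<Prod>e\<in>NP. sqrt (e0 e) * sqrt (e1 e) + sqrt (1 - e0 e) * sqrt (1 - e1 e))"
    by (rule sum_Pow_prod[OF fNP])
  also have "\<dots> = (\<Prod>e\<in>NP. if e \<in> D then a else 1)"
  proof (rule prod.cong)
    fix e assume eNP: "e \<in> NP"
    have b0: "0 \<le> e0 e" "e0 e \<le> 1" unfolding e0_def using ep_bounds[OF q0 qp p1] by auto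
    show "sqrt (e0 e) * sqrt (e1 e) + sqrt (1 - e0 e) * sqrt (1 - e1 e) = (if e \<in> D then a else 1)"
    proof (cases "e0 e = e1 e")
      case True
      have nD: "e \<notin> D" using True unfolding D_def e0_def e1_def by simp
      have "sqrt (e0 e) * sqrt (e0 e) + sqrt (1 - e0 e) * sqrt (1 - e0 e) = 1"
        using b0 by simp
      thus ?thesis using True nD by simp
    next
      case False
      hence iD: "e \<in> D" using eNP unfolding D_def NP_def e0_def e1_def by simp
      have "(e0 e = p \<and> e1 e = q) \<or> (e0 e = q \<and> e1 e = p)"
        using False unfolding e0_def e1_def edge_prob_def by (auto split: if_splits)
      thus ?thesis using iD unfolding a_def by (auto simp: mult.commute)
    qed
  qed simp
  also have "\<dots> = a ^ card D"
  proof -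
    have "(\<Prod>e\<in>NP. if e \<in> D then a else 1) = (\<Prod>e\<in>NP \<inter> {x. x \<in> D}. a) * (\<Prod>e\<in>NP \<inter> - {x. x \<in> D}. 1)"
      by (rule prod.If_cases[OF fNP])
    moreover have "NP \<inter> {x. x \<in> D} = D" using DNP by auto
    ultimately show ?thesis by simp
  qed
  finally show ?thesis unfolding NP_def a_def .
qed

theorem theorem2:
  fixes cK cL cU :: real
  assumes "cK > 0" and "cL > 0" and "cU > 0"
  shows "\<exists>c2 > 0. \<exists>N. \<forall>n \<ge> N. \<forall>n1 n2 K r :: nat. \<forall>p q :: real.
     \<forall>f :: (nat \<times> nat) set \<Rightarrow> nat set set.
       n = n1 + n2 \<and> n1 = r * K \<and> cK * real n \<le> real K \<and>
       cL * real n1 \<le> real n2 \<and> real n2 \<le> cU * real n1 \<and>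
       0 \<le> q \<and> q < p \<and> p \<le> 1 \<and>
       (\<forall>C. valid_clustering n r K C \<longrightarrow> success_prob n p q C f \<ge> 3 / 4)
       \<longrightarrow> (p - q) / sqrt (p * (1 - q)) \<ge> c2 / sqrt (real n)"
proof (intro exI[of _ "1/6"] conjI exI[of _ "1::nat"] allI impI)
  show "(0::real) < 1/6" by simp
  fix n n1 n2 K r :: nat and p q :: real and f :: "(nat \<times> nat) set \<Rightarrow> nat set set"
  assume n: "1 \<le> n"
  assume H: "n = n1 + n2 \<and> n1 = r * K \<and> cK * real n \<le> real K \<and>
       cL * real n1 \<le> real n2 \<and> real n2 \<le> cU * real n1 \<and>
       0 \<le> q \<and> q < p \<and> p \<le> 1 \<and>
       (\<forall>C. valid_clustering n r K C \<longrightarrow> success_prob n p q C f \<ge> 3 / 4)"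
  hence nn: "n = n1 + n2" and rK: "n1 = r * K" and cKn: "cK * real n \<le> real K"
    and cL: "cL * real n1 \<le> real n2" and cU: "real n2 \<le> cU * real n1"
    and q0: "0 \<le> q" and qp: "q < p" and p1: "p \<le> 1"
    and succ: "\<And>C. valid_clustering n r K C \<Longrightarrow> success_prob n p q C f \<ge> 3 / 4"
    by auto
  have "cK * real n > 0" using assms(1) n by simp
  hence K1: "K \<ge> 1" using cKn by linarith
  have n1pos: "n1 \<ge> 1"
  proof (rule ccontr)
    assume "\<not> n1 \<ge> 1"
    hence "n1 = 0" by simp
    hence "n2 = 0" using cU by simp
    thus False using n nn \<open>n1 = 0\<close> by simp
  qed
  have "real n1 > 0" using n1pos by simp
  hence "cL * real n1 > 0" using assms(2) by simp
  hence "real n2 > 0" using cL by linarith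
  hence n2pos: "n2 \<ge> 1" by simp
  have r1: "r \<ge> 1" using n1pos rK by (cases r) auto
  define C0 where "C0 = cl0 r K"
  define \<sigma> where "\<sigma> = sw 0 n1"
  define C1 where "C1 = (`) \<sigma> ` C0"
  have v0n1: "valid_clustering n1 r K C0" unfolding C0_def using rK K1 by (intro cl0_valid) auto
  have v0: "valid_clustering n r K C0" unfolding C0_def using rK K1 nn by (intro cl0_valid) auto
  have v1: "valid_clustering n r K C1" unfolding C1_def \<sigma>_def
    using v0 n1pos n2pos nn by (intro swap_valid) auto
  have C01: "C0 \<noteq> C1"
  proof
    assume eq: "C0 = C1"
    have "{0*K..<Suc 0*K} \<in> C0" unfolding C0_def cl0_def using r1 by (intro image_eqI[of _ _ 0]) auto
    hence "\<sigma> ` {0..<K} \<in> C1" unfolding C1_def by simp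
    hence "\<sigma> ` {0..<K} \<in> C0" using eq by simp
    hence "\<sigma> ` {0..<K} \<subseteq> {..<n1}" using v0n1 unfolding valid_clustering_def by auto
    moreover have "n1 \<in> \<sigma> ` {0..<K}" using K1 unfolding \<sigma>_def
      by (intro image_eqI[of _ _ 0]) (auto simp: sw_def)
    ultimately show False by auto
  qed
  let ?NP = "node_pairs n"
  define P where "P = graph_prob n p q C0"
  define Q where "Q = graph_prob n p q C1"
  define A where "A = {E. E \<subseteq> ?NP \<and> f E = C0}"
  define B where "B = {E. E \<subseteq> ?NP \<and> f E = C1}"
  have sA: "sum P A \<ge> 3/4" using succ[OF v0] unfolding success_prob_def P_def A_def .
  have sB: "sum Q B \<ge> 3/4" using succ[OF v1] unfolding success_prob_def Q_def B_def .
  define D where "D = {e \<in> ?NP. edge_prob p q C0 e \<noteq> edge_prob p q C1 e}"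
  have t1: "finite (Pow ?NP)" by (simp add: finite_np)
  have t2: "\<forall>w\<in>Pow ?NP. P w \<ge> 0" unfolding P_def using gp_nonneg[OF q0 qp p1] by blast
  have t3: "\<forall>w\<in>Pow ?NP. Q w \<ge> 0" unfolding Q_def using gp_nonneg[OF q0 qp p1] by blast
  have t4: "sum P (Pow ?NP) = 1" unfolding P_def by (rule gp_sum[OF q0 qp p1])
  have t5: "sum Q (Pow ?NP) = 1" unfolding Q_def by (rule gp_sum[OF q0 qp p1])
  have t6: "A \<subseteq> Pow ?NP" "B \<subseteq> Pow ?NP" unfolding A_def B_def by auto
  have t7: "A \<inter> B = {}" unfolding A_def B_def using C01 by auto
  have bc: "(\<Sum>E\<in>Pow ?NP. sqrt (P E) * sqrt (Q E)) \<le> 13/15"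
    by (rule tv_bound[OF t1 t2 t3 t4 t5 t6 t7 sA sB])
  have am: "(sqrt p * sqrt q + sqrt (1-p) * sqrt (1-q)) ^ card D \<le> 13/15"
    using bc bc_formula[OF q0 qp p1, of n C0 C1] unfolding P_def Q_def D_def by simp
  have Dsub: "D \<subseteq> ({0, n1} \<times> {..<n}) \<union> ({..<n} \<times> {0, n1})"
  proof
    fix e assume eD: "e \<in> D"
    obtain i j where e: "e = (i, j)" by (cases e)
    have ij: "i < n" "j < n" using eD e unfolding D_def node_pairs_def by auto
    have "i \<in> {0, n1} \<or> j \<in> {0, n1}"
    proof (rule ccontr)
      assume "\<not> (i \<in> {0, n1} \<or> j \<in> {0, n1})"
      hence "\<sigma> i = i" "\<sigma> j = j" unfolding \<sigma>_def sw_def by auto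
      hence "same_cluster C1 i j = same_cluster C0 i j" unfolding C1_def \<sigma>_def
        using swap_same[of 0 n1 C0 i j] by simp
      hence "edge_prob p q C0 e = edge_prob p q C1 e" unfolding edge_prob_def e by simp
      thus False using eD unfolding D_def by simp
    qed
    thus "e \<in> ({0, n1} \<times> {..<n}) \<union> ({..<n} \<times> {0, n1})" using ij e by auto
  qed
  have c2: "card {0, n1} \<le> 2" by (cases "n1 = 0") auto
  have "card D \<le> card (({0, n1} \<times> {..<n}) \<union> ({..<n} \<times> {0, n1}))"
    by (rule card_mono[OF _ Dsub]) simp
  also have "\<dots> \<le> card ({0, n1} \<times> {..<n}) + card ({..<n} \<times> {0, n1})" by (rule card_Un_le)
  also have "\<dots> = card {0, n1} * n + n * card {0, n1}" by (simp add: card_cartesian_product)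
  also have "\<dots> \<le> 2 * n + n * 2" using c2 by (intro add_mono mult_le_mono) auto
  finally have "card D \<le> 4 * n" by simp
  hence mn: "real (card D) \<le> 4 * real n" by simp
  show "1 / 6 / sqrt (real n) \<le> (p - q) / sqrt (p * (1 - q))"
    by (rule final[OF q0 qp p1 refl am mn]) (use n in simp)
qed


end
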